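(* Let $X$ and $Y$ be finite-dimensional real normed spaces and let $P:X\to Y$ be a mapping. Then $P$ is piecewise affine if and only if for every polyhedral partial order $\preceq$ on $Y$ both the $\preceq$-epigraph $\mathrm{epi}_\preceq P:=\{(x,y)\in X\times Y\mid P(x)\preceq y\}$ and the $\preceq$-hypograph $\mathrm{hyp}_\preceq P:=\{(x,y)\in X\times Y\mid y\preceq P(x)\}$ are polyhedral subsets of $X\times Y$.
   Context: A closed halfspace of a finite-dimensional space $Z$ is a set $\{z\in Z\mid a^*(z)\le\alpha\}$ with $a^*$ a nonzero linear functional and $\alpha\in\mathbb{R}$. A convex polyhedral set is an intersection of finitely many closed halfspaces (the whole space counts as convex polyhedral). A (not necessarily convex) set is polyhedral if it is the union of finitely many convex polyhedral sets. A polyhedral covering of a polyhedral set $Q$ is a finite family $\{M_1,\dots,M_k\}$ of convex polyhedral sets with $M_i\subset Q$ and $\bigcup_i M_i=Q$. A mapping $P:X\to Y$ is piecewise affine if there exist a polyhedral covering $\{M_1,\dots,M_k\}$ of $X$ and affine mappings $A_i:X\to Y$ (a linear mapping plus a constant) with $P(x)=A_i(x)$ for all $x\in M_i$, $i=1,\dots,k$. A partial order $\preceq$ on $Y$ is polyhedral if it is compatible with the vector operations (i.e. $y\preceq y'$ implies $y+z\preceq y'+z$ and $\lambda y\preceq\lambda y'$ for $\lambda\ge0$) and its positive cone $\{y\in Y\mid 0\preceq y\}$ is a convex polyhedral set. *)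

theory Defs
  imports "HOL-Analysis.Analysis"
begin

text \<open>Convex polyhedral sets are the library notion polyhedron (finite intersection
of closed halfspaces with nonzero normal; the empty intersection is the whole space).\<close>

definition polyhedral_set :: "'a::euclidean_space set \<Rightarrow> bool" where
  "polyhedral_set Q \<longleftrightarrow> (\<exists>F. finite F \<and> (\<forall>M\<in>F. polyhedron M) \<and> Q = \<Union>F)"

definition piecewise_affine :: "('a::euclidean_space \<Rightarrow> 'b::euclidean_space) \<Rightarrow> bool" where
  "piecewise_affine P \<longleftrightarrow>
     (\<exists>F. finite F \<and> (\<forall>M\<in>F. polyhedron M) \<and> \<Union>F = UNIV \<and>
          (\<forall>M\<in>F. \<exists>A c. linear A \<and> (\<forall>x\<in>M. P x = A x + c)))"

definition polyhedral_order :: "('b::euclidean_space \<Rightarrow> 'b \<Rightarrow> bool) \<Rightarrow> bool" where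
  "polyhedral_order le \<longleftrightarrow>
     (\<forall>y. le y y) \<and>
     (\<forall>y y'. le y y' \<and> le y' y \<longrightarrow> y = y') \<and>
     (\<forall>y y' y''. le y y' \<and> le y' y'' \<longrightarrow> le y y'') \<and>
     (\<forall>y y' z. le y y' \<longrightarrow> le (y + z) (y' + z)) \<and>
     (\<forall>y y' (t::real). le y y' \<and> 0 \<le> t \<longrightarrow> le (t *\<^sub>R y) (t *\<^sub>R y')) \<and>
     polyhedron {y. le 0 y}"

definition epigraph_wrt :: "('b \<Rightarrow> 'b \<Rightarrow> bool) \<Rightarrow> ('a \<Rightarrow> 'b) \<Rightarrow> ('a \<times> 'b) set" where
  "epigraph_wrt le P = {(x, y). le (P x) y}"

definition hypograph_wrt :: "('b \<Rightarrow> 'b \<Rightarrow> bool) \<Rightarrow> ('a \<Rightarrow> 'b) \<Rightarrow> ('a \<times> 'b) set" where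
  "hypograph_wrt le P = {(x, y). le y (P x)}"

end

theory Submission
  imports Defs
begin
lemma t1:
  fixes L :: "'a::euclidean_space \<Rightarrow> 'b::euclidean_space"
  assumes "linear L"
  shows "a \<bullet> (L x + d) = adjoint L a \<bullet> x + a \<bullet> d"
        using adjoint_works[OF assms, of x a] by (simp add: inner_add_right inner_commute)

lemma polyhedron_affine_preimage:
  fixes L :: "'a::euclidean_space \<Rightarrow> 'b::euclidean_space"
  assumes "polyhedron S" "linear L"
  shows "polyhedron {x. L x + d \<in> S}"
proof -
  obtain F where F: "finite F" "S = \<Inter>F" "\<forall>h\<in>F. \<exists>a b. a \<noteq> 0 \<and> h = {x. a \<bullet> x \<le> b}"
    using assms(1) unfolding polyhedron_def by (elim exE conjE) (rule that; assumption)
  have eq: "{x. L x + d \<in> S} = \<Inter>((\<lambda>h. {x. L x + d \<in> h}) ` F)"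
    unfolding F(2) by auto
  have "polyhedron {x. L x + d \<in> h}" if "h \<in> F" for h
  proof -
    have "\<exists>a b. a \<noteq> 0 \<and> h = {x. a \<bullet> x \<le> b}" using F(3) that by (rule bspec)
    then obtain a b where h: "h = {x. a \<bullet> x \<le> b}" by (elim exE conjE)
    have "{x. L x + d \<in> h} = {x. adjoint L a \<bullet> x \<le> b - a \<bullet> d}"
      unfolding h using t1[OF assms(2), of a _ d] by (simp add: algebra_simps)
    then show ?thesis by (simp add: polyhedron_halfspace_le)
  qed
  then show ?thesis unfolding eq using F(1) by (intro polyhedron_Inter) auto
qed

lemma functional_convex_affine:
  fixes G :: "('a::euclidean_space \<times> 'b::euclidean_space) set"
  assumes "convex G" and fnl: "\<And>p q. p \<in> G \<Longrightarrow> q \<in> G \<Longrightarrow> fst p = fst q \<Longrightarrow> p = q"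
  shows "\<exists>A c. linear A \<and> (\<forall>p\<in>G. snd p = A (fst p) + c)"
proof (cases "G = {}")
  case True
  then show ?thesis by (intro exI[of _ "\<lambda>x. 0"]) (auto simp: linear_zero)
next
  case False
  then obtain r where r: "r \<in> rel_interior G" using rel_interior_eq_empty[OF assms(1)] by auto
  from r have rG: "r \<in> G" and "\<exists>e. e > 0 \<and> cball r e \<inter> affine hull G \<subseteq> G"
    unfolding mem_rel_interior_cball by auto
  then obtain e where e: "e > 0" "cball r e \<inter> affine hull G \<subseteq> G" by (elim exE conjE)
  have rA: "r \<in> affine hull G" using rG hull_subset[of G affine] by (rule subsetD[rotated])
  have afun: "p = q" if p: "p \<in> affine hull G" and q: "q \<in> affine hull G" and f: "fst p = fst q" for p q
  proof -
    define t where "t = e / (norm (p - r) + norm (q - r) + 1)"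
    define D where "D = norm (p - r) + norm (q - r) + 1"
    have D0: "D > 0" unfolding D_def by (simp add: add_nonneg_pos)
    have t0: "t > 0" using e(1) D0 unfolding t_def D_def[symmetric] by simp
    have r1: "norm (p - r) / D \<le> 1" "norm (q - r) / D \<le> 1"
      using D0 by (simp_all add: D_def)
    have tp: "t * norm (p - r) \<le> e"
    proof -
      have "t * norm (p - r) = e * (norm (p - r) / D)" by (simp add: t_def D_def)
      also have "\<dots> \<le> e * 1" by (rule mult_left_mono[OF r1(1)]) (use e(1) in simp)
      finally show ?thesis by simp
    qed
    have tq: "t * norm (q - r) \<le> e"
    proof -
      have "t * norm (q - r) = e * (norm (q - r) / D)" by (simp add: t_def D_def)
      also have "\<dots> \<le> e * 1" by (rule mult_left_mono[OF r1(2)]) (use e(1) in simp)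
      finally show ?thesis by simp
    qed
    define p' where "p' = (1 - t) *\<^sub>R r + t *\<^sub>R p"
    define q' where "q' = (1 - t) *\<^sub>R r + t *\<^sub>R q"
    have "p' \<in> affine hull G" "q' \<in> affine hull G"
      unfolding p'_def q'_def by (rule mem_affine[OF affine_affine_hull rA p], simp, rule mem_affine[OF affine_affine_hull rA q], simp)
    moreover have "dist r p' \<le> e" "dist r q' \<le> e"
    proof -
      have "r - p' = t *\<^sub>R (r - p)" "r - q' = t *\<^sub>R (r - q)"
        by (simp_all add: p'_def q'_def algebra_simps)
      then have "dist r p' = t * norm (p - r)" "dist r q' = t * norm (q - r)"
        using t0 by (simp_all add: dist_norm norm_minus_commute)
      then show "dist r p' \<le> e" "dist r q' \<le> e" using tp tq by auto
    qed
    ultimately have "p' \<in> G" "q' \<in> G" using e(2) by auto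
    moreover have "fst p' = fst q'" using f by (simp add: p'_def q'_def)
    ultimately have "p' = q'" using fnl by blast
    then have "t *\<^sub>R p = t *\<^sub>R q" by (simp add: p'_def q'_def)
    then show ?thesis using t0 by simp
  qed
  define V where "V = (\<lambda>x. (-r) + x) ` (affine hull G)"
  have sV: "subspace V" unfolding V_def by (rule affine_diffs_subspace[OF affine_affine_hull rA])
  have spV: "span V = V" using sV span_eq_iff by blast
  have inj: "inj_on fst (span V)"
    unfolding spV
  proof (rule inj_onI)
    fix u v assume "u \<in> V" "v \<in> V" "fst u = fst v"
    then obtain p q where "p \<in> affine hull G" "q \<in> affine hull G" "u = -r + p" "v = -r + q"
      unfolding V_def by auto
    then show "u = v" using afun \<open>fst u = fst v\<close> by auto
  qed
  obtain g where g: "linear g" "\<forall>x\<in>span V. g (fst x) = x"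
    using linear_inj_on_left_inverse[OF linear_fst inj] by blast
  define A where "A = (\<lambda>x. snd (g x))"
  have lA: "linear A" unfolding A_def using g(1) linear_snd linear_compose[of g snd]
    by (simp add: o_def)
  show ?thesis
  proof (intro exI conjI)
    show "linear A" by (rule lA)
    show "\<forall>p\<in>G. snd p = A (fst p) + (snd r - A (fst r))"
    proof
      fix p assume "p \<in> G"
      then have "p \<in> affine hull G" using hull_subset[of G affine] by (rule subsetD[rotated])
      then have "-r + p \<in> V" unfolding V_def by (rule imageI)
      then have "g (fst (-r + p)) = -r + p" using g(2) spV by auto
      then have "A (fst p - fst r) = snd p - snd r" unfolding A_def by simp
      then show "snd p = A (fst p) + (snd r - A (fst r))"
        using linear_diff[OF lA] by (simp add: algebra_simps)
    qed
  qed
qed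


lemma le_shift:
  assumes "polyhedral_order le"
  shows "le u y \<longleftrightarrow> le 0 (y - u)"
proof -
  have tr: "\<forall>y y' z. le y y' \<longrightarrow> le (y + z) (y' + z)"
    using assms unfolding polyhedral_order_def by (elim conjE) assumption
  show ?thesis
  proof
    assume "le u y"
    then have "le (u + - u) (y + - u)" by (rule tr[rule_format])
    then show "le 0 (y - u)" by simp
  next
    assume "le 0 (y - u)"
    then have "le (0 + u) (y - u + u)" by (rule tr[rule_format])
    then show "le u y" by simp
  qed
qed

lemma eq_polyhedral_order: "polyhedral_order (\<lambda>x y::'b::euclidean_space. x = y)"
proof -
  have e: "{y::'b. 0 = y} = {0}" by blast
  have "polyhedron {0::'b}" by (rule affine_imp_polyhedron) (rule affine_sing)
  then have p: "polyhedron {y::'b. 0 = y}" by (simp only: e)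
  then show ?thesis unfolding polyhedral_order_def
    apply (intro conjI)
    subgoal by simp
    subgoal by blast
    subgoal by simp
    subgoal by simp
    subgoal by simp
    subgoal by (rule p)
    done
qed

lemma linear_diff_fun:
  assumes "linear (f :: 'a::real_vector \<Rightarrow> 'b::real_vector)" "linear g"
  shows "linear (\<lambda>x. f x - g x)"
  by (intro linearI) (simp_all add: linear_add[OF assms(1)] linear_add[OF assms(2)]
        linear_scale[OF assms(1)] linear_scale[OF assms(2)] algebra_simps)

lemma linear_pair_fun:
  assumes "linear (A :: 'a::real_vector \<Rightarrow> 'b::real_vector)"
  shows "linear (\<lambda>x. (x, A x))"
  by (intro linearI) (simp_all add: linear_add[OF assms] linear_scale[OF assms])

lemma forward:
  fixes P :: "'a::euclidean_space \<Rightarrow> 'b::euclidean_space"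
  assumes pa: "piecewise_affine P" and po: "polyhedral_order le"
  shows "polyhedral_set (epigraph_wrt le P) \<and> polyhedral_set (hypograph_wrt le P)"
proof -
  obtain F where F: "finite F" "\<forall>M\<in>F. polyhedron M" "\<Union>F = UNIV"
     and ex: "\<forall>M\<in>F. \<exists>A c. linear A \<and> (\<forall>x\<in>M. P x = A x + c)"
    using pa unfolding piecewise_affine_def by (elim exE conjE) (rule that; assumption)
  obtain A where A: "\<forall>M\<in>F. \<exists>c. linear (A M) \<and> (\<forall>x\<in>M. P x = A M x + c)"
    using bchoice[OF ex] by (elim exE)
  obtain c where Ac: "\<forall>M\<in>F. linear (A M) \<and> (\<forall>x\<in>M. P x = A M x + c M)"
    using bchoice[OF A] by (elim exE)
  define K where "K = {y. le 0 y}"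
  have K: "polyhedron K" using po unfolding polyhedral_order_def K_def by simp
  have cover: "\<exists>M\<in>F. x \<in> M" for x using F(3) by auto
  define E where "E M = {z::'a\<times>'b. fst z + 0 \<in> M} \<inter> {z. (snd z - A M (fst z)) + (- c M) \<in> K}" for M
  define H where "H M = {z::'a\<times>'b. fst z + 0 \<in> M} \<inter> {z. (A M (fst z) - snd z) + c M \<in> K}" for M
  have polyE: "polyhedron (E M)" "polyhedron (H M)" if "M \<in> F" for M
  proof -
    have lA: "linear (A M)" using Ac that by blast
    have l1: "linear (\<lambda>z::'a\<times>'b. snd z - A M (fst z))"
      by (rule linear_diff_fun[OF linear_snd]) (rule linear_compose[OF linear_fst lA, unfolded o_def])
    have l2: "linear (\<lambda>z::'a\<times>'b. A M (fst z) - snd z)"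
      by (rule linear_diff_fun[OF _ linear_snd]) (rule linear_compose[OF linear_fst lA, unfolded o_def])
    have p0: "polyhedron {z::'a\<times>'b. fst z + 0 \<in> M}"
      by (rule polyhedron_affine_preimage) (use F(2) that linear_fst in auto)
    show "polyhedron (E M)" unfolding E_def
      by (rule polyhedron_Int[OF p0 polyhedron_affine_preimage[OF K l1]])
    show "polyhedron (H M)" unfolding H_def
      by (rule polyhedron_Int[OF p0 polyhedron_affine_preimage[OF K l2]])
  qed
  have epi: "epigraph_wrt le P = \<Union>(E ` F)"
  proof (rule set_eqI)
    fix z :: "'a \<times> 'b"
    obtain x y where z: "z = (x, y)" by (cases z)
    obtain M where M: "M \<in> F" "x \<in> M" using cover by blast
    have "z \<in> epigraph_wrt le P \<longleftrightarrow> le (P x) y" by (simp add: z epigraph_wrt_def)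
    also have "\<dots> \<longleftrightarrow> (\<exists>M\<in>F. z \<in> E M)"
    proof
      assume "le (P x) y"
      then have "le 0 (y - P x)" by (simp only: le_shift[OF po, of "P x" y])
      moreover have "P x = A M x + c M" using Ac M by auto
      ultimately have "le 0 (y - (A M x + c M))" by simp
      then have "z \<in> E M" by (simp add: E_def K_def z M algebra_simps)
      then show "\<exists>M\<in>F. z \<in> E M" using M by blast
    next
      assume "\<exists>M\<in>F. z \<in> E M"
      then obtain M' where M': "M' \<in> F" "z \<in> E M'" by blast
      then have "x \<in> M'" "le 0 (y - (A M' x + c M'))" by (simp_all add: E_def K_def z algebra_simps)
      moreover have "P x = A M' x + c M'" using Ac M' \<open>x \<in> M'\<close> by auto
      ultimately have "le 0 (y - P x)" by simp
      then show "le (P x) y" by (simp only: le_shift[OF po, of "P x" y])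
    qed
    finally show "z \<in> epigraph_wrt le P \<longleftrightarrow> z \<in> \<Union>(E ` F)" by simp
  qed
  have hyp: "hypograph_wrt le P = \<Union>(H ` F)"
  proof (rule set_eqI)
    fix z :: "'a \<times> 'b"
    obtain x y where z: "z = (x, y)" by (cases z)
    obtain M where M: "M \<in> F" "x \<in> M" using cover by blast
    have "z \<in> hypograph_wrt le P \<longleftrightarrow> le y (P x)" by (simp add: z hypograph_wrt_def)
    also have "\<dots> \<longleftrightarrow> (\<exists>M\<in>F. z \<in> H M)"
    proof
      assume "le y (P x)"
      then have "le 0 (P x - y)" by (simp only: le_shift[OF po, of y "P x"])
      moreover have "P x = A M x + c M" using Ac M by auto
      ultimately have "le 0 ((A M x + c M) - y)" by simp
      then have "z \<in> H M" by (simp add: H_def K_def z M algebra_simps)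
      then show "\<exists>M\<in>F. z \<in> H M" using M by blast
    next
      assume "\<exists>M\<in>F. z \<in> H M"
      then obtain M' where M': "M' \<in> F" "z \<in> H M'" by blast
      then have "x \<in> M'" "le 0 ((A M' x + c M') - y)" by (simp_all add: H_def K_def z algebra_simps)
      moreover have "P x = A M' x + c M'" using Ac M' \<open>x \<in> M'\<close> by auto
      ultimately have "le 0 (P x - y)" by simp
      then show "le y (P x)" by (simp only: le_shift[OF po, of y "P x"])
    qed
    finally show "z \<in> hypograph_wrt le P \<longleftrightarrow> z \<in> \<Union>(H ` F)" by simp
  qed
  have "polyhedral_set (\<Union>(E ` F))" unfolding polyhedral_set_def
    by (rule exI[of _ "E ` F"]) (simp add: F(1) polyE)
  moreover have "polyhedral_set (\<Union>(H ` F))" unfolding polyhedral_set_def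
    by (rule exI[of _ "H ` F"]) (simp add: F(1) polyE)
  ultimately show ?thesis unfolding epi hyp by (rule conjI)
qed

lemma backward:
  fixes P :: "'a::euclidean_space \<Rightarrow> 'b::euclidean_space"
  assumes "polyhedral_set (epigraph_wrt (\<lambda>x y. x = y) P)"
  shows "piecewise_affine P"
proof -
  obtain FG where FG: "finite FG" "\<forall>G\<in>FG. polyhedron G" "epigraph_wrt (\<lambda>x y. x = y) P = \<Union>FG"
    using assms unfolding polyhedral_set_def by (elim exE conjE) (rule that; assumption)
  have graph: "P (fst p) = snd p" if "G \<in> FG" "p \<in> G" for G p
  proof -
    have "p \<in> \<Union>FG" using that by blast
    then have "p \<in> epigraph_wrt (\<lambda>x y. x = y) P" using FG(3) by simp
    then show ?thesis by (cases p) (simp add: epigraph_wrt_def)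
  qed
  have "\<forall>G\<in>FG. \<exists>A c. linear A \<and> (\<forall>p\<in>G. snd p = A (fst p) + c)"
  proof
    fix G assume G: "G \<in> FG"
    show "\<exists>A c. linear A \<and> (\<forall>p\<in>G. snd p = A (fst p) + c)"
    proof (rule functional_convex_affine)
      show "convex G" using G FG(2) polyhedron_imp_convex by blast
      fix p q assume "p \<in> G" "q \<in> G" "fst p = fst q"
      then show "p = q" using graph[OF G] by (metis prod.collapse)
    qed
  qed
  then have "\<exists>A. \<forall>G\<in>FG. \<exists>c. linear (A G) \<and> (\<forall>p\<in>G. snd p = A G (fst p) + c)"
    by (rule bchoice)
  then obtain A where A: "\<forall>G\<in>FG. \<exists>c. linear (A G) \<and> (\<forall>p\<in>G. snd p = A G (fst p) + c)"
    by (elim exE)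
  obtain c where Ac: "\<forall>G\<in>FG. linear (A G) \<and> (\<forall>p\<in>G. snd p = A G (fst p) + c G)"
    using bchoice[OF A] by (elim exE)
  define M where "M G = {x. (x, A G x) + (0, c G) \<in> G}" for G
  have polyM: "polyhedron (M G)" if "G \<in> FG" for G
    unfolding M_def
    by (rule polyhedron_affine_preimage) (use FG(2) that Ac linear_pair_fun in auto)
  show ?thesis unfolding piecewise_affine_def
  proof (intro exI[of _ "M ` FG"] conjI)
    show "finite (M ` FG)" using FG(1) by simp
    show "\<forall>N\<in>M ` FG. polyhedron N" using polyM by blast
    show "\<Union>(M ` FG) = UNIV"
    proof (rule set_eqI)
      fix x
      have "(x, P x) \<in> epigraph_wrt (\<lambda>x y. x = y) P" by (simp add: epigraph_wrt_def)
      then have "(x, P x) \<in> \<Union>FG" using FG(3) by simp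
      then obtain G where G: "G \<in> FG" "(x, P x) \<in> G" by blast
      then have "P x = A G x + c G" using Ac by fastforce
      then have "x \<in> M G" using G by (simp add: M_def)
      then show "x \<in> \<Union>(M ` FG) \<longleftrightarrow> x \<in> UNIV" using G by blast
    qed
    show "\<forall>N\<in>M ` FG. \<exists>A c. linear A \<and> (\<forall>x\<in>N. P x = A x + c)"
    proof
      fix N assume "N \<in> M ` FG"
      then obtain G where G: "G \<in> FG" "N = M G" by blast
      have "\<forall>x\<in>N. P x = A G x + c G"
      proof
        fix x assume "x \<in> N"
        then have "(x, A G x + c G) \<in> G" using G by (simp add: M_def)
        from graph[OF G(1) this] show "P x = A G x + c G" by simp
      qed
      then show "\<exists>A c. linear A \<and> (\<forall>x\<in>N. P x = A x + c)" using Ac G by blast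
    qed
  qed
qed

theorem theorem4p2:
  fixes P :: "'a::euclidean_space \<Rightarrow> 'b::euclidean_space"
  shows "piecewise_affine P \<longleftrightarrow>
    (\<forall>le. polyhedral_order le \<longrightarrow>
       polyhedral_set (epigraph_wrt le P) \<and> polyhedral_set (hypograph_wrt le P))"
proof
  assume "piecewise_affine P"
  then show "\<forall>le. polyhedral_order le \<longrightarrow>
       polyhedral_set (epigraph_wrt le P) \<and> polyhedral_set (hypograph_wrt le P)"
    using forward by blast
next
  assume "\<forall>le. polyhedral_order le \<longrightarrow>
       polyhedral_set (epigraph_wrt le P) \<and> polyhedral_set (hypograph_wrt le P)"
  then have "polyhedral_set (epigraph_wrt (\<lambda>x y. x = y) P)"
    using eq_polyhedral_order by blast
  then show "piecewise_affine P" by (rule backward)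
qed

end
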